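(* Let $(G_n)$ be a sequence of finite connected graphs, $G_n$ having $n$ vertices, all satisfying (bal) with a fixed parameter $D$. Let $(r_n)$ and $(t_n)$ be sequences of positive integers such that $r_n/(\log(n)\, t_{\mathrm{mix}}(G_n))\to\infty$ and $t_n/r_n\to1$. Then there is $n_0$ such that for all $n\ge n_0$, every vertex $u$ of $G_n$ and every nonempty vertex set $U$ of $G_n$, $$\Pr_u(\tau_U<t_n)\ge \tfrac13\,\mathrm{Cap}_{r_n}(U).$$
   Context: For a finite connected graph $G=(V,E)$, $d(v)$ is the degree of $v$ and $\delta(G),\Delta(G)$ the minimum and maximum degrees; (bal) with parameter $D$ means $\Delta(G)/\delta(G)\le D$. The lazy random walk $(X_t)$ on $G$ at each step stays put with probability $1/2$ and otherwise moves along a uniformly chosen incident edge; $\Pr_\mu$ denotes its law with $X_0\sim\mu$ ($\Pr_u$ if $X_0=u$). $\pi(v)=d(v)/(2|E|)$ and $\mathbf p^t(u,v)=\Pr_u(X_t=v)$. The uniform mixing time is $t_{\mathrm{mix}}(G)=\min\{t\ge0:\max_{u,v}|\mathbf p^t(u,v)/\pi(v)-1|\le1/2\}$. For nonempty $U\subseteq V$, $\tau_U=\min\{t\ge0:X_t\in U\}$ and for an integer $r\ge 0$, $\mathrm{Cap}_r(U)=\Pr_\pi(\tau_U<r)$. *)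

theory Defs
  imports Complex_Main
begin

definition simple_graph :: "'a set \<Rightarrow> ('a \<Rightarrow> 'a \<Rightarrow> bool) \<Rightarrow> bool" where
  "simple_graph V E \<longleftrightarrow> finite V \<and> (\<forall>x y. E x y \<longrightarrow> x \<in> V \<and> y \<in> V)
     \<and> (\<forall>x y. E x y \<longrightarrow> E y x) \<and> (\<forall>x. \<not> E x x)"

definition connected_graph :: "'a set \<Rightarrow> ('a \<Rightarrow> 'a \<Rightarrow> bool) \<Rightarrow> bool" where
  "connected_graph V E \<longleftrightarrow> V \<noteq> {} \<and> (\<forall>x\<in>V. \<forall>y\<in>V. E\<^sup>*\<^sup>* x y)"

definition deg :: "'a set \<Rightarrow> ('a \<Rightarrow> 'a \<Rightarrow> bool) \<Rightarrow> 'a \<Rightarrow> nat" where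
  "deg V E x = card {y \<in> V. E x y}"

definition min_deg :: "'a set \<Rightarrow> ('a \<Rightarrow> 'a \<Rightarrow> bool) \<Rightarrow> nat" where
  "min_deg V E = Min (deg V E ` V)"

definition max_deg :: "'a set \<Rightarrow> ('a \<Rightarrow> 'a \<Rightarrow> bool) \<Rightarrow> nat" where
  "max_deg V E = Max (deg V E ` V)"

definition balanced :: "real \<Rightarrow> 'a set \<Rightarrow> ('a \<Rightarrow> 'a \<Rightarrow> bool) \<Rightarrow> bool" where
  "balanced D V E \<longleftrightarrow> real (max_deg V E) / real (min_deg V E) \<le> D"

definition num_edges :: "'a set \<Rightarrow> ('a \<Rightarrow> 'a \<Rightarrow> bool) \<Rightarrow> nat" where
  "num_edges V E = card {{x, y} | x y. x \<in> V \<and> y \<in> V \<and> E x y}"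

definition lazyP :: "'a set \<Rightarrow> ('a \<Rightarrow> 'a \<Rightarrow> bool) \<Rightarrow> 'a \<Rightarrow> 'a \<Rightarrow> real" where
  "lazyP V E x y = (if x = y then 1/2 else 0)
      + (if E x y then 1 / (2 * real (deg V E x)) else 0)"

fun path_weight :: "'a set \<Rightarrow> ('a \<Rightarrow> 'a \<Rightarrow> bool) \<Rightarrow> 'a list \<Rightarrow> real" where
  "path_weight V E [] = 1"
| "path_weight V E [x] = 1"
| "path_weight V E (x # y # xs) = lazyP V E x y * path_weight V E (y # xs)"

text \<open>Trajectories (X_0,...,X_{k-1}) of length k started at u.\<close>
definition trajs :: "'a set \<Rightarrow> nat \<Rightarrow> 'a \<Rightarrow> 'a list set" where
  "trajs V k u = {xs. length xs = k \<and> set xs \<subseteq> V \<and> xs \<noteq> [] \<and> hd xs = u}"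

definition stat_dist :: "'a set \<Rightarrow> ('a \<Rightarrow> 'a \<Rightarrow> bool) \<Rightarrow> 'a \<Rightarrow> real" where
  "stat_dist V E v = real (deg V E v) / (2 * real (num_edges V E))"

definition ptrans :: "'a set \<Rightarrow> ('a \<Rightarrow> 'a \<Rightarrow> bool) \<Rightarrow> nat \<Rightarrow> 'a \<Rightarrow> 'a \<Rightarrow> real" where
  "ptrans V E t u v = (\<Sum>xs \<in> {xs \<in> trajs V (Suc t) u. last xs = v}. path_weight V E xs)"

definition tmix :: "'a set \<Rightarrow> ('a \<Rightarrow> 'a \<Rightarrow> bool) \<Rightarrow> nat" where
  "tmix V E = (LEAST t. \<forall>u\<in>V. \<forall>v\<in>V.
      \<bar>ptrans V E t u v / stat_dist V E v - 1\<bar> \<le> 1/2)"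

text \<open>Pr_u(\<tau>_U < t): the trajectory X_0,...,X_{t-1} meets U.\<close>
definition hit_before :: "'a set \<Rightarrow> ('a \<Rightarrow> 'a \<Rightarrow> bool) \<Rightarrow> 'a set \<Rightarrow> nat \<Rightarrow> 'a \<Rightarrow> real" where
  "hit_before V E U t u = (\<Sum>xs \<in> {xs \<in> trajs V t u. set xs \<inter> U \<noteq> {}}. path_weight V E xs)"

definition Cap :: "'a set \<Rightarrow> ('a \<Rightarrow> 'a \<Rightarrow> bool) \<Rightarrow> nat \<Rightarrow> 'a set \<Rightarrow> real" where
  "Cap V E r U = (\<Sum>u\<in>V. stat_dist V E u * hit_before V E U r u)"

end

theory Submission
  imports Defs
begin

locale G =
  fixes V :: "'a set" and E :: "'a \<Rightarrow> 'a \<Rightarrow> bool"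
  assumes sg: "simple_graph V E" and cg: "connected_graph V E" and two: "card V \<ge> 2"
begin

abbreviation P where "P \<equiv> lazyP V E"
abbreviation \<pi> where "\<pi> \<equiv> stat_dist V E"

lemma finV: "finite V" using sg by (simp add: simple_graph_def)
lemma EV1: "E x y \<Longrightarrow> x \<in> V" using sg by (simp add: simple_graph_def)
lemma EV2: "E x y \<Longrightarrow> y \<in> V" using sg by (simp add: simple_graph_def)
lemma Esym: "E x y \<Longrightarrow> E y x" using sg by (simp add: simple_graph_def)
lemma Eirr: "\<not> E x x" using sg by (simp add: simple_graph_def)
lemma conn: "x \<in> V \<Longrightarrow> y \<in> V \<Longrightarrow> E\<^sup>*\<^sup>* x y" using cg by (simp add: connected_graph_def)

lemma deg_pos: assumes "x \<in> V" shows "deg V E x > 0"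
proof -
  have "\<exists>y\<in>V. y \<noteq> x"
  proof (rule ccontr)
    assume "\<not> ?thesis"
    hence "V \<subseteq> {x}" by auto
    hence "card V \<le> card {x}" by (intro card_mono) simp_all
    hence "card V \<le> 1" by simp
    with two show False by simp
  qed
  then obtain y where y: "y \<in> V" "y \<noteq> x" by blast
  have "E\<^sup>*\<^sup>* x y" using conn[OF assms y(1)] .
  then obtain z where "E x z" using y(2) by (metis converse_rtranclpE)
  hence "z \<in> {y \<in> V. E x y}" using EV2 by auto
  moreover have "finite {y \<in> V. E x y}" using finV by simp
  ultimately show ?thesis unfolding deg_def by (metis card_gt_0_iff empty_iff)
qed

lemma P_nonneg: "P x y \<ge> 0"
  by (simp add: lazyP_def)

lemma row_sum: assumes "x \<in> V" shows "(\<Sum>y\<in>V. P x y) = 1"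
proof -
  have d: "deg V E x > 0" using deg_pos[OF assms] .
  have "(\<Sum>y\<in>V. P x y) = (\<Sum>y\<in>V. (if x = y then 1/2 else 0)) + (\<Sum>y\<in>V. (if E x y then 1 / (2 * real (deg V E x)) else 0))"
    unfolding lazyP_def by (simp add: sum.distrib)
  also have "(\<Sum>y\<in>V. (if x = y then 1/2 else (0::real))) = 1/2"
    using assms finV by (simp add: sum.delta)
  also have "(\<Sum>y\<in>V. (if E x y then 1 / (2 * real (deg V E x)) else 0)) = real (card {y\<in>V. E x y}) * (1 / (2 * real (deg V E x)))"
    using finV by (simp add: sum.inter_filter[symmetric])
  also have "\<dots> = 1/2" using d unfolding deg_def by simp
  finally show ?thesis by simp
qed

lemma handshake: "(\<Sum>v\<in>V. deg V E v) = 2 * num_edges V E"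
proof -
  define Pr where "Pr = (SIGMA x:V. {y\<in>V. E x y})"
  define f where "f = (\<lambda>p::'a\<times>'a. {fst p, snd p})"
  have finPr: "finite Pr" unfolding Pr_def using finV by auto
  have c1: "card Pr = (\<Sum>v\<in>V. deg V E v)" unfolding Pr_def deg_def using finV by simp
  have ed: "{{x, y} | x y. x \<in> V \<and> y \<in> V \<and> E x y} = f ` Pr"
  proof
    show "{{x, y} | x y. x \<in> V \<and> y \<in> V \<and> E x y} \<subseteq> f ` Pr"
    proof
      fix e assume "e \<in> {{x, y} | x y. x \<in> V \<and> y \<in> V \<and> E x y}"
      then obtain x y where "e = {x,y}" "x \<in> V" "y \<in> V" "E x y" by blast
      hence "(x,y) \<in> Pr" "e = f (x,y)" unfolding Pr_def f_def by auto
      thus "e \<in> f ` Pr" by blast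
    qed
    show "f ` Pr \<subseteq> {{x, y} | x y. x \<in> V \<and> y \<in> V \<and> E x y}"
    proof
      fix e assume "e \<in> f ` Pr"
      then obtain x y where "(x,y) \<in> Pr" "e = f (x,y)" by auto
      hence "e = {x,y}" "x \<in> V" "y \<in> V" "E x y" unfolding Pr_def f_def by auto
      thus "e \<in> {{x, y} | x y. x \<in> V \<and> y \<in> V \<and> E x y}" by blast
    qed
  qed
  have Pr_eq: "Pr = (\<Union>e\<in>f ` Pr. {p\<in>Pr. f p = e})" by blast
  have "card Pr = (\<Sum>e\<in>f ` Pr. card {p\<in>Pr. f p = e})"
    apply (subst Pr_eq)
    apply (rule card_UN_disjoint)
    using finPr by simp_all blast
  also have "\<dots> = (\<Sum>e\<in>f ` Pr. 2)"
  proof (rule sum.cong[OF refl])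
    fix e assume "e \<in> f ` Pr"
    then obtain a b where ab: "(a,b) \<in> Pr" "e = {a,b}" unfolding f_def by auto
    have Eab: "E a b" "a \<in> V" "b \<in> V" using ab unfolding Pr_def by auto
    have neq: "a \<noteq> b" using Eab Eirr by auto
    have "{p\<in>Pr. f p = e} = {(a,b),(b,a)}"
    proof
      show "{p\<in>Pr. f p = e} \<subseteq> {(a,b),(b,a)}"
      proof
        fix p assume p: "p \<in> {p\<in>Pr. f p = e}"
        obtain x y where xy: "p = (x,y)" by fastforce
        have "{x,y} = {a,b}" using p xy ab(2) unfolding f_def by simp
        hence "(x = a \<and> y = b) \<or> (x = b \<and> y = a)" by (simp add: doubleton_eq_iff)
        thus "p \<in> {(a,b),(b,a)}" using xy by auto
      qed
      have "(b,a) \<in> Pr" using Eab Esym unfolding Pr_def by simp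
      moreover have "f (b,a) = e" "f (a,b) = e" using ab(2) unfolding f_def by (simp_all add: insert_commute)
      ultimately show "{(a,b),(b,a)} \<subseteq> {p\<in>Pr. f p = e}" using ab(1) by simp
    qed
    thus "card {p\<in>Pr. f p = e} = 2" using neq by simp
  qed
  finally have "card Pr = 2 * card (f ` Pr)" by simp
  moreover have "num_edges V E = card (f ` Pr)" unfolding num_edges_def ed ..
  ultimately show ?thesis using c1 by simp
qed

lemma m_pos: "num_edges V E > 0"
proof -
  obtain x where "x \<in> V" using two by fastforce
  hence "(\<Sum>v\<in>V. deg V E v) > 0" using deg_pos finV
    by (meson sum_pos2 zero_le)
  thus ?thesis using handshake by simp
qed

lemma pi_pos: "x \<in> V \<Longrightarrow> \<pi> x > 0"
  using deg_pos m_pos by (simp add: stat_dist_def)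

lemma pi_nonneg: "\<pi> x \<ge> 0"
  by (simp add: stat_dist_def)

lemma pi_sum: "(\<Sum>v\<in>V. \<pi> v) = 1"
proof -
  have "(\<Sum>v\<in>V. \<pi> v) = (\<Sum>v\<in>V. real (deg V E v)) / (2 * real (num_edges V E))"
    unfolding stat_dist_def by (simp add: sum_divide_distrib)
  also have "(\<Sum>v\<in>V. real (deg V E v)) = 2 * real (num_edges V E)"
    using handshake by (metis of_nat_mult of_nat_numeral of_nat_sum)
  finally show ?thesis using m_pos by simp
qed

lemma balance: assumes "x \<in> V" "y \<in> V" shows "\<pi> x * P x y = \<pi> y * P y x"
proof (cases "x = y")
  case True thus ?thesis by simp
next
  case False
  show ?thesis
  proof (cases "E x y")
    case True
    hence "E y x" by (rule Esym)
    thus ?thesis using True False deg_pos[OF assms(1)] deg_pos[OF assms(2)]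
      by (simp add: lazyP_def stat_dist_def)
  next
    case F: False
    hence "\<not> E y x" using Esym by blast
    thus ?thesis using F False by (simp add: lazyP_def)
  qed
qed

lemma trajs_fin: "finite (trajs V k u)"
  by (rule finite_subset[OF _ finite_lists_length_eq[OF finV, of k]]) (auto simp: trajs_def)

lemma trajs_one: "u \<in> V \<Longrightarrow> trajs V (Suc 0) u = {[u]}"
  unfolding trajs_def by (auto simp: length_Suc_conv)

lemma trajs_split_set: assumes "u \<in> V"
  shows "trajs V (Suc (Suc t)) u = (\<Union>w\<in>V. Cons u ` trajs V (Suc t) w)"
proof
  show "trajs V (Suc (Suc t)) u \<subseteq> (\<Union>w\<in>V. Cons u ` trajs V (Suc t) w)"
  proof
    fix xs assume xs: "xs \<in> trajs V (Suc (Suc t)) u"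
    then obtain a w zs where eq: "xs = a # w # zs" "length zs = t"
      unfolding trajs_def by (auto simp: length_Suc_conv)
    have "a = u" "w \<in> V" "set zs \<subseteq> V" using xs eq unfolding trajs_def by auto
    hence "w # zs \<in> trajs V (Suc t) w" using eq unfolding trajs_def by auto
    thus "xs \<in> (\<Union>w\<in>V. Cons u ` trajs V (Suc t) w)" using eq \<open>a = u\<close> \<open>w \<in> V\<close> by blast
  qed
  show "(\<Union>w\<in>V. Cons u ` trajs V (Suc t) w) \<subseteq> trajs V (Suc (Suc t)) u"
    using assms unfolding trajs_def by auto
qed

lemma trajs_sum_split: assumes "u \<in> V"
  shows "(\<Sum>xs\<in>trajs V (Suc (Suc t)) u. g xs) = (\<Sum>w\<in>V. \<Sum>ys\<in>trajs V (Suc t) w. g (u # ys))"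
proof -
  have "(\<Sum>xs\<in>trajs V (Suc (Suc t)) u. g xs) = (\<Sum>w\<in>V. \<Sum>xs\<in>Cons u ` trajs V (Suc t) w. g xs)"
    unfolding trajs_split_set[OF assms]
  proof (rule sum.UNION_disjoint)
    show "finite V" by (rule finV)
    show "\<forall>w\<in>V. finite (Cons u ` trajs V (Suc t) w)" using trajs_fin by blast
    show "\<forall>w\<in>V. \<forall>w'\<in>V. w \<noteq> w' \<longrightarrow> Cons u ` trajs V (Suc t) w \<inter> Cons u ` trajs V (Suc t) w' = {}"
      unfolding trajs_def by auto
  qed
  also have "\<dots> = (\<Sum>w\<in>V. \<Sum>ys\<in>trajs V (Suc t) w. g (u # ys))"
    by (rule sum.cong[OF refl], subst sum.reindex) (auto simp: inj_on_def)
  finally show ?thesis .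
qed

lemma pw_cons: assumes "ys \<in> trajs V (Suc t) w"
  shows "path_weight V E (u # ys) = P u w * path_weight V E ys"
proof -
  obtain zs where "ys = w # zs" using assms unfolding trajs_def by (cases ys) auto
  thus ?thesis by simp
qed

lemma singleton_filter: "{xs. xs = a \<and> Q xs} = (if Q a then {a} else {})" by auto

primrec pk :: "nat \<Rightarrow> 'a \<Rightarrow> 'a \<Rightarrow> real" where
  "pk 0 u v = (if u = v then 1 else 0)"
| "pk (Suc k) u v = (\<Sum>w\<in>V. P u w * pk k w v)"

primrec hk :: "'a set \<Rightarrow> nat \<Rightarrow> 'a \<Rightarrow> real" where
  "hk U 0 u = 0"
| "hk U (Suc j) u = (if u \<in> U then 1 else (\<Sum>w\<in>V. P u w * hk U j w))"

lemma tw: "w \<in> V \<Longrightarrow> (\<Sum>ys\<in>trajs V (Suc t) w. path_weight V E ys) = 1"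
proof (induction t arbitrary: w)
  case 0 thus ?case by (simp add: trajs_one)
next
  case (Suc t)
  have "(\<Sum>ys\<in>trajs V (Suc (Suc t)) w. path_weight V E ys)
     = (\<Sum>v\<in>V. \<Sum>ys\<in>trajs V (Suc t) v. path_weight V E (w # ys))"
    by (rule trajs_sum_split[OF Suc.prems])
  also have "\<dots> = (\<Sum>v\<in>V. P w v * (\<Sum>ys\<in>trajs V (Suc t) v. path_weight V E ys))"
    by (simp add: pw_cons sum_distrib_left)
  also have "\<dots> = (\<Sum>v\<in>V. P w v)" using Suc.IH by simp
  also have "\<dots> = 1" using row_sum[OF Suc.prems] .
  finally show ?case .
qed

lemma ptrans_pk: "u \<in> V \<Longrightarrow> ptrans V E t u v = pk t u v"
proof (induction t arbitrary: u)
  case 0 thus ?case by (simp add: ptrans_def trajs_one singleton_filter)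
next
  case (Suc t)
  have "ptrans V E (Suc t) u v = (\<Sum>xs\<in>trajs V (Suc (Suc t)) u. if last xs = v then path_weight V E xs else 0)"
    unfolding ptrans_def using trajs_fin by (simp add: sum.inter_filter)
  also have "\<dots> = (\<Sum>w\<in>V. \<Sum>ys\<in>trajs V (Suc t) w. if last (u # ys) = v then path_weight V E (u # ys) else 0)"
    by (rule trajs_sum_split[OF Suc.prems])
  also have "\<dots> = (\<Sum>w\<in>V. P u w * (\<Sum>ys\<in>trajs V (Suc t) w. if last ys = v then path_weight V E ys else 0))"
  proof (rule sum.cong[OF refl])
    fix w assume "w \<in> V"
    show "(\<Sum>ys\<in>trajs V (Suc t) w. if last (u # ys) = v then path_weight V E (u # ys) else 0)
        = P u w * (\<Sum>ys\<in>trajs V (Suc t) w. if last ys = v then path_weight V E ys else 0)"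
      unfolding sum_distrib_left
      by (rule sum.cong[OF refl]) (auto simp: pw_cons trajs_def)
  qed
  also have "\<dots> = (\<Sum>w\<in>V. P u w * ptrans V E t w v)"
    unfolding ptrans_def using trajs_fin by (simp add: sum.inter_filter)
  also have "\<dots> = (\<Sum>w\<in>V. P u w * pk t w v)" using Suc.IH by simp
  finally show ?case by simp
qed

lemma hit_hk: "u \<in> V \<Longrightarrow> hit_before V E U j u = hk U j u"
proof (induction j arbitrary: u rule: nat_less_induct)
  case (1 j u)
  show ?case
  proof (cases j)
    case 0 thus ?thesis by (simp add: hit_before_def trajs_def)
  next
    case (Suc j')
    show ?thesis
    proof (cases j')
      case 0 thus ?thesis using Suc "1.prems" by (simp add: hit_before_def trajs_one singleton_filter)
    next
      case (Suc t)
      have jj: "j = Suc (Suc t)" using Suc \<open>j = Suc j'\<close> by simp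
      have "hit_before V E U j u = (\<Sum>xs\<in>trajs V (Suc (Suc t)) u. if set xs \<inter> U \<noteq> {} then path_weight V E xs else 0)"
        unfolding hit_before_def jj using trajs_fin by (simp add: sum.inter_filter)
      also have "\<dots> = (\<Sum>w\<in>V. \<Sum>ys\<in>trajs V (Suc t) w. if set (u # ys) \<inter> U \<noteq> {} then path_weight V E (u # ys) else 0)"
        by (rule trajs_sum_split[OF "1.prems"])
      also have "\<dots> = hk U j u"
      proof (cases "u \<in> U")
        case True
        have "(\<Sum>w\<in>V. \<Sum>ys\<in>trajs V (Suc t) w. if set (u # ys) \<inter> U \<noteq> {} then path_weight V E (u # ys) else 0)
           = (\<Sum>w\<in>V. P u w * (\<Sum>ys\<in>trajs V (Suc t) w. path_weight V E ys))"
          using True by (simp add: pw_cons sum_distrib_left)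
        also have "\<dots> = 1" using tw row_sum[OF "1.prems"] by simp
        finally show ?thesis using True jj by simp
      next
        case False
        have "(\<Sum>w\<in>V. \<Sum>ys\<in>trajs V (Suc t) w. if set (u # ys) \<inter> U \<noteq> {} then path_weight V E (u # ys) else 0)
           = (\<Sum>w\<in>V. P u w * (\<Sum>ys\<in>trajs V (Suc t) w. if set ys \<inter> U \<noteq> {} then path_weight V E ys else 0))"
          unfolding sum_distrib_left
          by (rule sum.cong[OF refl], rule sum.cong[OF refl]) (use False in \<open>auto simp: pw_cons\<close>)
        also have "\<dots> = (\<Sum>w\<in>V. P u w * hit_before V E U (Suc t) w)"
          unfolding hit_before_def using trajs_fin by (simp add: sum.inter_filter)
        also have "\<dots> = (\<Sum>w\<in>V. P u w * hk U (Suc t) w)"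
          using "1.IH" jj by simp
        finally show ?thesis using False jj by simp
      qed
      finally show ?thesis .
    qed
  qed
qed

lemma pk_nonneg: "pk k u v \<ge> 0"
  by (induction k arbitrary: u) (auto intro!: sum_nonneg mult_nonneg_nonneg P_nonneg)

lemma hk_nonneg: "hk U j u \<ge> 0"
  by (induction j arbitrary: u) (auto intro!: sum_nonneg mult_nonneg_nonneg P_nonneg)

lemma hk_le1: "u \<in> V \<Longrightarrow> hk U j u \<le> 1"
proof (induction j arbitrary: u)
  case 0 thus ?case by simp
next
  case (Suc j)
  have "(\<Sum>w\<in>V. P u w * hk U j w) \<le> (\<Sum>w\<in>V. P u w)"
    by (rule sum_mono) (use Suc.IH P_nonneg in \<open>auto intro: mult_left_le\<close>)
  thus ?case using row_sum[OF Suc.prems] by simp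
qed

lemma pk_CK: "u \<in> V \<Longrightarrow> pk (a + b) u v = (\<Sum>w\<in>V. pk a u w * pk b w v)"
proof (induction a arbitrary: u)
  case 0
  have "(\<Sum>w\<in>V. pk 0 u w * pk b w v) = (\<Sum>w\<in>V. if u = w then pk b w v else 0)"
    by (rule sum.cong) auto
  thus ?case using finV 0 by (simp add: sum.delta)
next
  case (Suc a)
  have "pk (Suc a + b) u v = (\<Sum>x\<in>V. P u x * pk (a + b) x v)" by simp
  also have "\<dots> = (\<Sum>x\<in>V. P u x * (\<Sum>w\<in>V. pk a x w * pk b w v))"
    using Suc.IH by simp
  also have "\<dots> = (\<Sum>x\<in>V. \<Sum>w\<in>V. P u x * pk a x w * pk b w v)"
    by (simp add: sum_distrib_left mult.assoc)
  also have "\<dots> = (\<Sum>w\<in>V. \<Sum>x\<in>V. P u x * pk a x w * pk b w v)"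
    by (rule sum.swap)
  also have "\<dots> = (\<Sum>w\<in>V. (\<Sum>x\<in>V. P u x * pk a x w) * pk b w v)"
    by (simp add: sum_distrib_right)
  finally show ?case by simp
qed

lemma pk_row: "u \<in> V \<Longrightarrow> (\<Sum>v\<in>V. pk k u v) = 1"
proof (induction k arbitrary: u)
  case 0 thus ?case using finV by (simp add: sum.delta)
next
  case (Suc k)
  have "(\<Sum>v\<in>V. pk (Suc k) u v) = (\<Sum>v\<in>V. \<Sum>w\<in>V. P u w * pk k w v)" by simp
  also have "\<dots> = (\<Sum>w\<in>V. \<Sum>v\<in>V. P u w * pk k w v)" by (rule sum.swap)
  also have "\<dots> = (\<Sum>w\<in>V. P u w * (\<Sum>v\<in>V. pk k w v))"
    by (simp add: sum_distrib_left)
  also have "\<dots> = (\<Sum>w\<in>V. P u w)" using Suc.IH by simp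
  finally show ?case using row_sum[OF Suc.prems] by simp
qed

lemma pi_P: "w \<in> V \<Longrightarrow> (\<Sum>z\<in>V. \<pi> z * P z w) = \<pi> w"
proof -
  assume w: "w \<in> V"
  have "(\<Sum>z\<in>V. \<pi> z * P z w) = (\<Sum>z\<in>V. \<pi> w * P w z)"
    by (rule sum.cong[OF refl]) (use balance w in auto)
  also have "\<dots> = \<pi> w" using row_sum[OF w] by (simp add: sum_distrib_left[symmetric])
  finally show ?thesis .
qed

lemma pk_stat: "y \<in> V \<Longrightarrow> (\<Sum>z\<in>V. \<pi> z * pk k z y) = \<pi> y"
proof (induction k)
  case 0
  have "(\<Sum>z\<in>V. \<pi> z * pk 0 z y) = (\<Sum>z\<in>V. if z = y then \<pi> z else 0)"
    by (rule sum.cong) auto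
  thus ?case using finV 0 by (simp add: sum.delta)
next
  case (Suc k)
  have "(\<Sum>z\<in>V. \<pi> z * pk (Suc k) z y) = (\<Sum>z\<in>V. \<Sum>w\<in>V. \<pi> z * P z w * pk k w y)"
    by (simp add: sum_distrib_left mult.assoc)
  also have "\<dots> = (\<Sum>w\<in>V. \<Sum>z\<in>V. \<pi> z * P z w * pk k w y)" by (rule sum.swap)
  also have "\<dots> = (\<Sum>w\<in>V. (\<Sum>z\<in>V. \<pi> z * P z w) * pk k w y)"
    by (simp add: sum_distrib_right)
  also have "\<dots> = (\<Sum>w\<in>V. \<pi> w * pk k w y)" using pi_P by simp
  finally show ?case using Suc by simp
qed

lemma pk_one: assumes "z \<in> V" shows "pk 1 w z = P w z"
proof -
  have "pk 1 w z = (\<Sum>x\<in>V. if x = z then P w x else 0)"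
    by simp (rule sum.cong, auto)
  thus ?thesis using finV assms by (simp add: sum.delta)
qed

lemma pk_ge_term: assumes "x \<in> V" "w \<in> V" "z \<in> V"
  shows "pk (Suc k) x z \<ge> pk k x w * P w z"
proof -
  have "pk (Suc k) x z = (\<Sum>w'\<in>V. pk k x w' * pk 1 w' z)"
    using pk_CK[OF assms(1), of k 1 z] by simp
  also have "\<dots> = (\<Sum>w'\<in>V. pk k x w' * P w' z)" using pk_one[OF assms(3)] by simp
  also have "\<dots> \<ge> pk k x w * P w z"
    by (rule member_le_sum) (use assms finV pk_nonneg P_nonneg in auto)
  finally show ?thesis .
qed

lemma pk_diag_pos: "x \<in> V \<Longrightarrow> pk k x x > 0"
proof (induction k)
  case 0 thus ?case by simp
next
  case (Suc k)
  have "pk (Suc k) x x \<ge> pk k x x * P x x" by (rule pk_ge_term) (use Suc.prems in auto)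
  moreover have "P x x = 1/2" using Eirr by (simp add: lazyP_def)
  ultimately show ?case using Suc by simp
qed

lemma pk_event_pos: assumes "x \<in> V" "E\<^sup>*\<^sup>* x z" shows "\<exists>K. \<forall>k\<ge>K. pk k x z > 0"
  using assms(2)
proof (induction rule: rtranclp_induct)
  case base thus ?case using pk_diag_pos[OF assms(1)] by blast
next
  case (step y z)
  then obtain K where K: "\<forall>k\<ge>K. pk k x y > 0" by blast
  have yz: "y \<in> V" "z \<in> V" "P y z > 0"
    using step(2) EV1 EV2 Eirr deg_pos[OF EV1[OF step(2)]] by (auto simp: lazyP_def)
  have "\<forall>k\<ge>Suc K. pk k x z > 0"
  proof (intro allI impI)
    fix k assume "k \<ge> Suc K"
    then obtain k' where k': "k = Suc k'" "k' \<ge> K" by (cases k) auto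
    have "pk (Suc k') x z \<ge> pk k' x y * P y z" by (rule pk_ge_term) (use assms yz in auto)
    moreover have "pk k' x y * P y z > 0" using K k' yz by simp
    ultimately show "pk k x z > 0" using k' by simp
  qed
  thus ?case by blast
qed

lemma pk_unif_pos: "\<exists>K. \<forall>x\<in>V. \<forall>z\<in>V. pk K x z > 0"
proof -
  have "finite S \<Longrightarrow> S \<subseteq> V \<times> V \<Longrightarrow> \<exists>K. \<forall>p\<in>S. \<forall>k\<ge>K. pk k (fst p) (snd p) > 0" for S
  proof (induction S rule: finite_induct)
    case empty thus ?case by simp
  next
    case (insert p S)
    then obtain K where K: "\<forall>p\<in>S. \<forall>k\<ge>K. pk k (fst p) (snd p) > 0" by auto
    have "fst p \<in> V" "snd p \<in> V" using insert.prems by auto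
    then obtain K' where K': "\<forall>k\<ge>K'. pk k (fst p) (snd p) > 0"
      using pk_event_pos conn by blast
    have "\<forall>q\<in>insert p S. \<forall>k\<ge>max K K'. pk k (fst q) (snd q) > 0" using K K' by auto
    thus ?case by blast
  qed
  from this[of "V \<times> V"] finV obtain K where "\<forall>p\<in>V\<times>V. \<forall>k\<ge>K. pk k (fst p) (snd p) > 0" by auto
  thus ?thesis by auto
qed

lemma Vne: "V \<noteq> {}" using two by auto

lemma mixing_exists: "\<exists>T. \<forall>u\<in>V. \<forall>v\<in>V. \<bar>pk T u v / \<pi> v - 1\<bar> \<le> 1/2"
proof -
  obtain K where K: "\<forall>x\<in>V. \<forall>z\<in>V. pk K x z > 0" using pk_unif_pos by blast
  define S where "S = (\<lambda>(x,z). pk K x z / \<pi> z) ` (V \<times> V)"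
  define \<alpha> where "\<alpha> = Min S"
  have finS: "finite S" "S \<noteq> {}" unfolding S_def using finV Vne by auto
  have Spos: "\<forall>s\<in>S. s > 0" unfolding S_def using K pi_pos by auto
  have apos: "\<alpha> > 0" unfolding \<alpha>_def using finS Spos by (simp add: Min_gr_iff)
  have ale: "\<alpha> * \<pi> z \<le> pk K x z" if "x \<in> V" "z \<in> V" for x z
  proof -
    have "pk K x z / \<pi> z \<in> S" unfolding S_def using that by force
    hence "\<alpha> \<le> pk K x z / \<pi> z" unfolding \<alpha>_def using finS by simp
    thus ?thesis using pi_pos[OF that(2)] by (simp add: pos_le_divide_eq)
  qed
  obtain x0 where x0: "x0 \<in> V" using Vne by blast
  have "\<alpha> = (\<Sum>z\<in>V. \<alpha> * \<pi> z)" using pi_sum by (simp add: sum_distrib_left[symmetric])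
  also have "\<dots> \<le> (\<Sum>z\<in>V. pk K x0 z)" by (rule sum_mono) (use ale x0 in auto)
  also have "\<dots> = 1" using pk_row[OF x0] .
  finally have a1: "\<alpha> \<le> 1" .
  have contr: "\<forall>x\<in>V. \<forall>y\<in>V. \<bar>pk (K + t) x y / \<pi> y - 1\<bar> \<le> (1 - \<alpha>) * c"
    if hyp: "\<forall>x\<in>V. \<forall>y\<in>V. \<bar>pk t x y / \<pi> y - 1\<bar> \<le> c" for t c
  proof (intro ballI)
    fix x y assume xy: "x \<in> V" "y \<in> V"
    define f where "f = (\<lambda>z. pk t z y / \<pi> y)"
    define Q where "Q = (\<lambda>z. pk K x z)"
    have h1: "pk (K + t) x y / \<pi> y = (\<Sum>z\<in>V. Q z * f z)"
      unfolding pk_CK[OF xy(1)] Q_def f_def by (simp add: sum_divide_distrib)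
    have h2: "(\<Sum>z\<in>V. Q z) = 1" unfolding Q_def using pk_row[OF xy(1)] .
    have h3: "(\<Sum>z\<in>V. \<pi> z * f z) = 1"
    proof -
      have "(\<Sum>z\<in>V. \<pi> z * f z) = (\<Sum>z\<in>V. \<pi> z * pk t z y) / \<pi> y"
        unfolding f_def by (simp add: sum_divide_distrib)
      thus ?thesis using pk_stat[OF xy(2)] pi_pos[OF xy(2)] by simp
    qed
    have h5: "(\<Sum>z\<in>V. (Q z - \<alpha> * \<pi> z) * (f z - 1))
        = (\<Sum>z\<in>V. Q z * f z) - (\<Sum>z\<in>V. Q z) - \<alpha> * (\<Sum>z\<in>V. \<pi> z * f z) + \<alpha> * (\<Sum>z\<in>V. \<pi> z)"
      by (simp add: algebra_simps sum.distrib sum_subtractf sum_distrib_left)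
    have eq: "pk (K + t) x y / \<pi> y - 1 = (\<Sum>z\<in>V. (Q z - \<alpha> * \<pi> z) * (f z - 1))"
      using h1 h2 h3 h5 pi_sum by simp
    have "\<bar>\<Sum>z\<in>V. (Q z - \<alpha> * \<pi> z) * (f z - 1)\<bar> \<le> (\<Sum>z\<in>V. \<bar>(Q z - \<alpha> * \<pi> z) * (f z - 1)\<bar>)"
      by (rule sum_abs)
    also have "\<dots> \<le> (\<Sum>z\<in>V. (Q z - \<alpha> * \<pi> z) * c)"
    proof (rule sum_mono)
      fix z assume z: "z \<in> V"
      have q: "Q z - \<alpha> * \<pi> z \<ge> 0" using ale[OF xy(1) z] unfolding Q_def by simp
      have "\<bar>f z - 1\<bar> \<le> c" using hyp z xy unfolding f_def by blast
      thus "\<bar>(Q z - \<alpha> * \<pi> z) * (f z - 1)\<bar> \<le> (Q z - \<alpha> * \<pi> z) * c"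
        using q by (simp add: abs_mult mult_left_mono)
    qed
    also have "\<dots> = (1 - \<alpha>) * c"
      using h2 pi_sum by (simp add: sum_distrib_right[symmetric] sum_subtractf sum_distrib_left[symmetric])
    finally show "\<bar>pk (K + t) x y / \<pi> y - 1\<bar> \<le> (1 - \<alpha>) * c" using eq by simp
  qed
  define c0 where "c0 = (\<Sum>y\<in>V. 1 / \<pi> y) + 1"
  have "(\<Sum>y\<in>V. 1 / \<pi> y) \<ge> 0" by (rule sum_nonneg) (simp add: pi_nonneg)
  hence c0pos: "c0 > 0" unfolding c0_def by linarith
  have iter: "\<forall>x\<in>V. \<forall>y\<in>V. \<bar>pk (m * K) x y / \<pi> y - 1\<bar> \<le> (1 - \<alpha>) ^ m * c0" for m
  proof (induction m)
    case 0
    show ?case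
    proof (intro ballI)
      fix x y assume xy: "x \<in> V" "y \<in> V"
      have ip: "1 / \<pi> y > 0" using pi_pos[OF xy(2)] by simp
      have "\<bar>pk 0 x y / \<pi> y - 1\<bar> \<le> 1 / \<pi> y + 1"
        using ip by (auto simp: abs_le_iff)
      also have "1 / \<pi> y \<le> (\<Sum>y\<in>V. 1 / \<pi> y)"
        by (rule member_le_sum) (use xy finV pi_nonneg in auto)
      finally show "\<bar>pk (0 * K) x y / \<pi> y - 1\<bar> \<le> (1 - \<alpha>) ^ 0 * c0" unfolding c0_def by simp
    qed
  next
    case (Suc m)
    from contr[OF Suc.IH] show ?case by (simp add: mult.assoc)
  qed
  obtain m where m: "(1 - \<alpha>) ^ m < 1 / (2 * c0)"
    using real_arch_pow_inv[of "1 / (2 * c0)" "1 - \<alpha>"] c0pos apos by auto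
  have "(1 - \<alpha>) ^ m * c0 \<le> 1/2"
    using m c0pos by (simp add: field_simps)
  hence "\<forall>u\<in>V. \<forall>v\<in>V. \<bar>pk (m * K) u v / \<pi> v - 1\<bar> \<le> 1/2"
    using iter[of m] by (meson order_trans)
  thus ?thesis by blast
qed

lemma tmix_prop: assumes "u \<in> V" "v \<in> V" shows "pk (tmix V E) u v \<ge> \<pi> v / 2"
proof -
  define Q where "Q = (\<lambda>t. \<forall>u\<in>V. \<forall>v\<in>V. \<bar>ptrans V E t u v / stat_dist V E v - 1\<bar> \<le> 1/2)"
  obtain T where "\<forall>u\<in>V. \<forall>v\<in>V. \<bar>pk T u v / \<pi> v - 1\<bar> \<le> 1/2" using mixing_exists by blast
  hence "Q T" unfolding Q_def using ptrans_pk by simp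
  hence "Q (LEAST t. Q t)" by (rule LeastI)
  hence "Q (tmix V E)" unfolding tmix_def Q_def .
  hence "\<bar>pk (tmix V E) u v / \<pi> v - 1\<bar> \<le> 1/2" unfolding Q_def using assms ptrans_pk by simp
  hence "pk (tmix V E) u v / \<pi> v \<ge> 1/2" by (simp only: abs_le_iff) linarith
  thus ?thesis using pi_pos[OF assms(2)] by (simp add: pos_le_divide_eq)
qed

lemma hk_step: assumes "u \<in> V" shows "hk U (Suc i) u \<ge> (\<Sum>w\<in>V. P u w * hk U i w)"
proof (cases "u \<in> U")
  case True
  have "(\<Sum>w\<in>V. P u w * hk U i w) \<le> (\<Sum>w\<in>V. P u w)"
    by (rule sum_mono) (use hk_le1 P_nonneg in \<open>auto intro: mult_left_le\<close>)
  thus ?thesis using True row_sum[OF assms] by simp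
qed simp

lemma window: "u \<in> V \<Longrightarrow> hk U (s + j) u \<ge> (\<Sum>v\<in>V. pk s u v * hk U j v)"
proof (induction s arbitrary: u)
  case 0
  have "(\<Sum>v\<in>V. pk 0 u v * hk U j v) = (\<Sum>v\<in>V. if u = v then hk U j v else 0)"
    by (rule sum.cong) auto
  thus ?case using finV 0 by (simp add: sum.delta)
next
  case (Suc s)
  have "(\<Sum>v\<in>V. pk (Suc s) u v * hk U j v) = (\<Sum>v\<in>V. \<Sum>w\<in>V. P u w * pk s w v * hk U j v)"
    by (simp add: sum_distrib_right)
  also have "\<dots> = (\<Sum>w\<in>V. \<Sum>v\<in>V. P u w * pk s w v * hk U j v)" by (rule sum.swap)
  also have "\<dots> = (\<Sum>w\<in>V. P u w * (\<Sum>v\<in>V. pk s w v * hk U j v))"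
    by (simp add: sum_distrib_left mult.assoc)
  also have "\<dots> \<le> (\<Sum>w\<in>V. P u w * hk U (s + j) w)"
    by (rule sum_mono) (use Suc.IH P_nonneg in \<open>auto intro: mult_left_mono\<close>)
  also have "\<dots> \<le> hk U (Suc (s + j)) u" by (rule hk_step[OF Suc.prems])
  finally show ?case by simp
qed

definition Tf :: "'a set \<Rightarrow> ('a \<Rightarrow> real) \<Rightarrow> 'a \<Rightarrow> real" where
  "Tf U f u = (if u \<in> U then 0 else (\<Sum>w\<in>V. P u w * f w))"
definition Ts :: "'a set \<Rightarrow> ('a \<Rightarrow> real) \<Rightarrow> 'a \<Rightarrow> real" where
  "Ts U f w = (\<Sum>u\<in>V. P w u * (if u \<in> U then 0 else f u))"
definition ip :: "('a \<Rightarrow> real) \<Rightarrow> ('a \<Rightarrow> real) \<Rightarrow> real" where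
  "ip f g = (\<Sum>u\<in>V. \<pi> u * f u * g u)"

primrec Tp :: "'a set \<Rightarrow> nat \<Rightarrow> ('a \<Rightarrow> real) \<Rightarrow> 'a \<Rightarrow> real" where
  "Tp U 0 g = g" | "Tp U (Suc j) g = Tf U (Tp U j g)"
primrec Tsp :: "'a set \<Rightarrow> nat \<Rightarrow> ('a \<Rightarrow> real) \<Rightarrow> 'a \<Rightarrow> real" where
  "Tsp U 0 f = f" | "Tsp U (Suc j) f = Tsp U j (Ts U f)"

lemma adj: "ip f (Tf U g) = ip (Ts U f) g"
proof -
  have "ip f (Tf U g) = (\<Sum>u\<in>V. \<Sum>w\<in>V. (if u \<in> U then 0 else \<pi> u * P u w * f u * g w))"
    unfolding ip_def Tf_def by (rule sum.cong[OF refl]) (auto simp: sum_distrib_left mult_ac)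
  also have "\<dots> = (\<Sum>w\<in>V. \<Sum>u\<in>V. (if u \<in> U then 0 else \<pi> u * P u w * f u * g w))"
    by (rule sum.swap)
  also have "\<dots> = (\<Sum>w\<in>V. \<Sum>u\<in>V. \<pi> w * P w u * (if u \<in> U then 0 else f u) * g w)"
    by (rule sum.cong[OF refl], rule sum.cong[OF refl]) (use balance in auto)
  also have "\<dots> = ip (Ts U f) g"
    unfolding ip_def Ts_def by (rule sum.cong[OF refl]) (auto simp: sum_distrib_left sum_distrib_right mult_ac)
  finally show ?thesis .
qed

lemma adjj: "ip f (Tp U j g) = ip (Tsp U j f) g"
  by (induction j arbitrary: f) (simp_all add: adj)

lemma rr: "u \<in> V \<Longrightarrow> hk U (Suc j) u - hk U j u = Tp U j (\<lambda>u. if u \<in> U then 1 else 0) u"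
proof (induction j arbitrary: u)
  case 0 thus ?case by simp
next
  case (Suc j)
  show ?case
  proof (cases "u \<in> U")
    case True thus ?thesis by (simp add: Tf_def)
  next
    case False
    have "hk U (Suc (Suc j)) u - hk U (Suc j) u = (\<Sum>w\<in>V. P u w * (hk U (Suc j) w - hk U j w))"
      using False by (simp add: sum_subtractf[symmetric] right_diff_distrib)
    also have "\<dots> = (\<Sum>w\<in>V. P u w * Tp U j (\<lambda>u. if u \<in> U then 1 else 0) w)"
      using Suc.IH by simp
    finally show ?thesis using False by (simp add: Tf_def)
  qed
qed

lemma Ts_mono: "(\<forall>x\<in>V. f x \<le> g x) \<Longrightarrow> Ts U f y \<le> Ts U g y"
  unfolding Ts_def by (rule sum_mono) (auto intro: mult_left_mono P_nonneg)

lemma Ts_nonneg: "(\<forall>x\<in>V. f x \<ge> 0) \<Longrightarrow> Ts U f y \<ge> 0"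
  unfolding Ts_def by (rule sum_nonneg) (auto intro: mult_nonneg_nonneg P_nonneg)

lemma Tsp_mono: "(\<forall>x\<in>V. f x \<le> g x) \<Longrightarrow> x \<in> V \<Longrightarrow> Tsp U j f x \<le> Tsp U j g x"
proof (induction j arbitrary: f g)
  case 0 thus ?case by simp
next
  case (Suc j)
  have "\<forall>x\<in>V. Ts U f x \<le> Ts U g x" using Ts_mono Suc.prems(1) by blast
  thus ?case using Suc by simp
qed

lemma Tsp_nonneg: "(\<forall>x\<in>V. f x \<ge> 0) \<Longrightarrow> x \<in> V \<Longrightarrow> Tsp U j f x \<ge> 0"
proof (induction j arbitrary: f)
  case 0 thus ?case by simp
next
  case (Suc j)
  have "\<forall>x\<in>V. Ts U f x \<ge> 0" using Ts_nonneg Suc.prems(1) by blast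
  thus ?case using Suc by simp
qed

definition Capk :: "'a set \<Rightarrow> nat \<Rightarrow> real" where
  "Capk U j = (\<Sum>v\<in>V. \<pi> v * hk U j v)"

lemma Cap_Capk: "Cap V E j U = Capk U j"
  unfolding Cap_def Capk_def using hit_hk by simp

lemma incr: "Capk U (Suc j) - Capk U j = ip (Tsp U j (\<lambda>_. 1)) (\<lambda>u. if u \<in> U then 1 else 0)"
proof -
  have "Capk U (Suc j) - Capk U j = (\<Sum>v\<in>V. \<pi> v * (hk U (Suc j) v - hk U j v))"
    unfolding Capk_def by (simp add: sum_subtractf[symmetric] right_diff_distrib)
  also have "\<dots> = ip (\<lambda>_. 1) (Tp U j (\<lambda>u. if u \<in> U then 1 else 0))"
    unfolding ip_def using rr by simp
  finally show ?thesis using adjj by simp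
qed

lemma incr_nonneg: "Capk U (Suc j) - Capk U j \<ge> 0"
  unfolding incr ip_def
  by (rule sum_nonneg) (auto intro!: mult_nonneg_nonneg pi_nonneg Tsp_nonneg)

lemma incr_dec: "Capk U (Suc (Suc j)) - Capk U (Suc j) \<le> Capk U (Suc j) - Capk U j"
proof -
  have t1: "\<forall>x\<in>V. Ts U (\<lambda>_. 1) x \<le> 1"
  proof
    fix x assume x: "x \<in> V"
    have "Ts U (\<lambda>_. 1) x \<le> (\<Sum>u\<in>V. P x u)"
      unfolding Ts_def by (rule sum_mono) (auto intro: P_nonneg)
    thus "Ts U (\<lambda>_. 1) x \<le> 1" using row_sum[OF x] by simp
  qed
  have "\<forall>x\<in>V. Tsp U (Suc j) (\<lambda>_. 1) x \<le> Tsp U j (\<lambda>_. 1) x"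
    using Tsp_mono[OF t1] by simp
  thus ?thesis unfolding incr ip_def
    by (intro sum_mono) (auto intro!: mult_right_mono mult_left_mono pi_nonneg)
qed

lemma Capk0: "Capk U 0 = 0" unfolding Capk_def by simp

lemma Capk_nonneg: "Capk U j \<ge> 0"
  unfolding Capk_def by (rule sum_nonneg) (auto intro: mult_nonneg_nonneg pi_nonneg hk_nonneg)

lemma Capk_mono: "i \<le> j \<Longrightarrow> Capk U i \<le> Capk U j"
proof -
  have "incseq (Capk U)" by (rule incseq_SucI) (use incr_nonneg in \<open>simp add: algebra_simps\<close>)
  thus "i \<le> j \<Longrightarrow> Capk U i \<le> Capk U j" by (simp add: incseqD)
qed

lemma avg_lemma:
  fixes a :: "nat \<Rightarrow> real"
  assumes dec: "\<And>i. a (Suc i) \<le> a i" and "m \<le> r"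
  shows "real m * (\<Sum>i<r. a i) \<le> real r * (\<Sum>i<m. a i)"
proof -
  have ds: "decseq a" by (rule decseq_SucI) (rule dec)
  have split: "(\<Sum>i<r. a i) = (\<Sum>i<m. a i) + (\<Sum>i\<in>{m..<r}. a i)"
    using assms(2) by (metis sum.atLeastLessThan_concat lessThan_atLeast0 zero_le)
  have b1: "(\<Sum>i<m. a i) \<ge> real m * a m"
  proof -
    have "(\<Sum>i<m. a m) \<le> (\<Sum>i<m. a i)" by (rule sum_mono) (use ds in \<open>simp add: decseqD\<close>)
    thus ?thesis by simp
  qed
  have b2: "(\<Sum>i\<in>{m..<r}. a i) \<le> real (r - m) * a m"
  proof -
    have "(\<Sum>i\<in>{m..<r}. a i) \<le> (\<Sum>i\<in>{m..<r}. a m)" by (rule sum_mono) (use ds in \<open>simp add: decseqD\<close>)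
    thus ?thesis by simp
  qed
  have rm: "real (r - m) = real r - real m" using assms(2) by simp
  have "real m * (\<Sum>i\<in>{m..<r}. a i) \<le> real m * (real (r - m) * a m)"
    using b2 by (simp add: mult_left_mono)
  also have "\<dots> = real (r - m) * (real m * a m)" by simp
  also have "\<dots> \<le> real (r - m) * (\<Sum>i<m. a i)" using b1 by (simp add: mult_left_mono)
  finally have "real m * (\<Sum>i\<in>{m..<r}. a i) \<le> (real r - real m) * (\<Sum>i<m. a i)" using rm by simp
  thus ?thesis using split by (simp add: algebra_simps)
qed

lemma Capk_concave: assumes "m \<le> r" shows "real m * Capk U r \<le> real r * Capk U m"
proof -
  define a where "a = (\<lambda>i. Capk U (Suc i) - Capk U i)"
  have tel: "Capk U n = (\<Sum>i<n. a i)" for n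
    unfolding a_def using sum_lessThan_telescope[of "Capk U" n] Capk0 by simp
  show ?thesis unfolding tel
    by (rule avg_lemma[OF _ assms]) (unfold a_def, rule incr_dec)
qed

lemma single:
  assumes u: "u \<in> V" and st: "tmix V E \<le> t" and tr: "3 * (real t - real (tmix V E)) \<ge> 2 * real r"
    and rpos: "r > 0"
  shows "hit_before V E U t u \<ge> 1/3 * Cap V E r U"
proof -
  define s where "s = tmix V E"
  have "hk U t u = hk U (s + (t - s)) u" using st unfolding s_def by simp
  also have "\<dots> \<ge> (\<Sum>v\<in>V. pk s u v * hk U (t - s) v)" by (rule window[OF u])
  finally have h1: "hk U t u \<ge> (\<Sum>v\<in>V. pk s u v * hk U (t - s) v)" .
  have "(\<Sum>v\<in>V. pk s u v * hk U (t - s) v) \<ge> (\<Sum>v\<in>V. (\<pi> v / 2) * hk U (t - s) v)"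
  proof (rule sum_mono)
    fix v assume v: "v \<in> V"
    have "\<pi> v / 2 \<le> pk s u v" using tmix_prop[OF u v] unfolding s_def .
    thus "\<pi> v / 2 * hk U (t - s) v \<le> pk s u v * hk U (t - s) v"
      by (rule mult_right_mono) (rule hk_nonneg)
  qed
  also have "(\<Sum>v\<in>V. (\<pi> v / 2) * hk U (t - s) v) = Capk U (t - s) / 2"
    unfolding Capk_def by (simp add: sum_divide_distrib)
  finally have h2: "hk U t u \<ge> Capk U (t - s) / 2" using h1 by simp
  have h3: "Capk U (t - s) \<ge> 2/3 * Capk U r"
  proof (cases "r \<le> t - s")
    case True
    have "Capk U r \<le> Capk U (t - s)" using Capk_mono[OF True] .
    thus ?thesis using Capk_nonneg[of U r] by linarith
  next
    case False
    hence le: "t - s \<le> r" by simp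
    have "real (t - s) * Capk U r \<le> real r * Capk U (t - s)" by (rule Capk_concave[OF le])
    moreover have "real (t - s) \<ge> 2/3 * real r" using tr st unfolding s_def by simp
    ultimately have "2/3 * real r * Capk U r \<le> real r * Capk U (t - s)"
      using Capk_nonneg[of U r] by (meson mult_right_mono order_trans)
    thus ?thesis using rpos by simp
  qed
  show ?thesis using h2 h3 hit_hk[OF u] Cap_Capk by simp
qed

end

theorem mainTheorem4:
  fixes V :: "nat \<Rightarrow> 'a set" and E :: "nat \<Rightarrow> 'a \<Rightarrow> 'a \<Rightarrow> bool"
    and D :: real and r t :: "nat \<Rightarrow> nat"
  assumes graphs: "\<And>n. n \<ge> 2 \<Longrightarrow> simple_graph (V n) (E n) \<and> connected_graph (V n) (E n)
                        \<and> card (V n) = n \<and> balanced D (V n) (E n)"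
    and r_pos: "\<And>n. r n > 0" and t_pos: "\<And>n. t n > 0"
    and r_growth: "filterlim (\<lambda>n. real (r n) / (ln (real n) * real (tmix (V n) (E n)))) at_top sequentially"
    and t_r: "(\<lambda>n. real (t n) / real (r n)) \<longlonglongrightarrow> 1"
  shows "\<exists>n0. \<forall>n\<ge>n0. \<forall>u\<in>V n. \<forall>U. U \<subseteq> V n \<longrightarrow> U \<noteq> {} \<longrightarrow>
           hit_before (V n) (E n) U (t n) u \<ge> 1/3 * Cap (V n) (E n) (r n) U"
proof -
  have ev1: "\<forall>\<^sub>F n in sequentially. 6 \<le> real (r n) / (ln (real n) * real (tmix (V n) (E n)))"
    using r_growth by (simp add: filterlim_at_top)
  have ev2: "\<forall>\<^sub>F n in sequentially. 5/6 < real (t n) / real (r n)"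
    using order_tendstoD(1)[OF t_r, of "5/6"] by simp
  have ev3: "\<forall>\<^sub>F n in sequentially. 3 \<le> n" by (rule eventually_ge_at_top)
  have "\<forall>\<^sub>F n in sequentially. 6 \<le> real (r n) / (ln (real n) * real (tmix (V n) (E n)))
      \<and> 5/6 < real (t n) / real (r n) \<and> 3 \<le> n"
    using ev1 ev2 ev3 by (intro eventually_conj)
  then obtain N where N: "\<And>n. n \<ge> N \<Longrightarrow> 6 \<le> real (r n) / (ln (real n) * real (tmix (V n) (E n)))
      \<and> 5/6 < real (t n) / real (r n) \<and> 3 \<le> n"
    unfolding eventually_sequentially by blast
  show ?thesis
  proof (intro exI[of _ N] allI impI ballI)
    fix n u U assume n: "N \<le> n" and u: "u \<in> V n" and "U \<subseteq> V n" "U \<noteq> {}"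
    have f1: "6 \<le> real (r n) / (ln (real n) * real (tmix (V n) (E n)))"
      and f2: "5/6 < real (t n) / real (r n)" and f3: "3 \<le> n" using N[OF n] by auto
    have gr: "simple_graph (V n) (E n)" "connected_graph (V n) (E n)" "card (V n) = n"
      using graphs[of n] f3 by auto
    interpret G "V n" "E n" using gr f3 by unfold_locales auto
    define T where "T = real (tmix (V n) (E n))"
    define L where "L = ln (real n)"
    have "exp 1 \<le> (3::real)" using exp_le by simp
    hence "exp 1 \<le> real n" using f3 by linarith
    hence "ln (exp 1) \<le> ln (real n)" using f3 by (subst ln_le_cancel_iff) auto
    hence L1: "L \<ge> 1" unfolding L_def by simp
    have T0: "T \<ge> 0" unfolding T_def by simp
    have LT: "L * T > 0"
    proof (rule ccontr)
      assume "\<not> L * T > 0"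
      hence "L * T = 0" using L1 T0 mult_nonneg_nonneg[of L T] by linarith
      hence "real (r n) / (L * T) = 0" by simp
      thus False using f1 unfolding L_def T_def by linarith
    qed
    have "6 * (L * T) \<le> real (r n)" using f1 LT unfolding L_def T_def by (simp add: pos_le_divide_eq)
    moreover have "T \<le> L * T" using L1 T0 by (simp add: mult_right_mono[of 1 L T, simplified])
    ultimately have rT: "6 * T \<le> real (r n)" by linarith
    have rp: "real (r n) > 0" using r_pos by simp
    have tr: "5/6 * real (r n) < real (t n)" using f2 rp by (simp add: field_simps)
    have st: "tmix (V n) (E n) \<le> t n" using rT tr unfolding T_def by linarith
    have "3 * (real (t n) - real (tmix (V n) (E n))) = 3 * real (t n) - 3 * T" unfolding T_def by simp
    hence "3 * (real (t n) - real (tmix (V n) (E n))) \<ge> 2 * real (r n)" using rT tr by linarith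
    from single[OF u st this r_pos[of n]]
    show "hit_before (V n) (E n) U (t n) u \<ge> 1/3 * Cap (V n) (E n) (r n) U" .
  qed
qed

end
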